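(* Let $\mathcal{G}=(\mathcal{V}_x,\mathcal{E}_x)$ be a finite simple undirected graph with edge probabilities $p:\mathcal{E}_x\to[0,1]$, and let $k\ge 1$ be an integer. Let $f:2^{\mathcal{E}_x}\to\mathbb{R}_{\ge0}$ be the modular function $f(\mathcal{E})=\sum_{e\in\mathcal{E}}p(e)$. Define $g:2^{\mathcal{V}_x}\to\mathbb{R}_{\ge 0}$ by $g(\varnothing)=0$ and, for $\mathcal{V}\subseteq\mathcal{V}_x$, $$g(\mathcal{V})=\max\Big\{\textstyle\sum_{e\in\mathcal{E}}p(e)\;:\;\mathcal{E}\subseteq \mathsf{edges}(\mathcal{V}),\ |\mathcal{E}|\le k\Big\}$$ (i.e., the sum of the $k$ largest edge probabilities in $\mathsf{edges}(\mathcal{V})$, or the sum over all of $\mathsf{edges}(\mathcal{V})$ if it has at most $k$ edges). Then $g$ is normalized, monotone, and submodular.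
   Context: For $\mathcal{V}\subseteq\mathcal{V}_x$, $\mathsf{edges}(\mathcal{V})$ denotes the set of all edges of $\mathcal{G}$ incident to at least one vertex in $\mathcal{V}$. A set function $h:2^{W}\to\mathbb{R}_{\ge0}$ on a finite set $W$ is normalized if $h(\varnothing)=0$, monotone if $h(A)\le h(B)$ whenever $A\subseteq B$, and submodular if $h(A)+h(B)\ge h(A\cup B)+h(A\cap B)$ for all $A,B\subseteq W$. *)

theory Defs
  imports Complex_Main
begin

definition simple_graph :: "'a set \<Rightarrow> 'a set set \<Rightarrow> bool" where
  "simple_graph Vx Es \<longleftrightarrow> finite Vx \<and> (\<forall>e\<in>Es. e \<subseteq> Vx \<and> card e = 2)"

definition edges_of :: "'a set set \<Rightarrow> 'a set \<Rightarrow> 'a set set" where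
  "edges_of Es V = {e \<in> Es. e \<inter> V \<noteq> {}}"

definition topk_fun :: "'a set set \<Rightarrow> ('a set \<Rightarrow> real) \<Rightarrow> nat \<Rightarrow> 'a set \<Rightarrow> real" where
  "topk_fun Es p k V =
     (if V = {} then 0
      else Max {(\<Sum>e\<in>F. p e) | F. F \<subseteq> edges_of Es V \<and> card F \<le> k})"

definition set_fun_nonneg :: "'b set \<Rightarrow> ('b set \<Rightarrow> real) \<Rightarrow> bool" where
  "set_fun_nonneg W h \<longleftrightarrow> (\<forall>A. A \<subseteq> W \<longrightarrow> 0 \<le> h A)"

definition set_fun_normalized :: "('b set \<Rightarrow> real) \<Rightarrow> bool" where
  "set_fun_normalized h \<longleftrightarrow> h {} = 0"

definition set_fun_monotone :: "'b set \<Rightarrow> ('b set \<Rightarrow> real) \<Rightarrow> bool" where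
  "set_fun_monotone W h \<longleftrightarrow> (\<forall>A B. A \<subseteq> B \<and> B \<subseteq> W \<longrightarrow> h A \<le> h B)"

definition set_fun_submodular :: "'b set \<Rightarrow> ('b set \<Rightarrow> real) \<Rightarrow> bool" where
  "set_fun_submodular W h \<longleftrightarrow>
     (\<forall>A B. A \<subseteq> W \<and> B \<subseteq> W \<longrightarrow> h A + h B \<ge> h (A \<union> B) + h (A \<inter> B))"

end

theory Submission
  imports Defs
begin

definition hk :: "('a set \<Rightarrow> real) \<Rightarrow> nat \<Rightarrow> 'a set set \<Rightarrow> real" where
  "hk p k E = Max {(\<Sum>e\<in>F. p e) | F. F \<subseteq> E \<and> card F \<le> k}"

lemma hk_fin:
  assumes "finite E"
  shows "finite {(\<Sum>e\<in>F. p e) | F. F \<subseteq> E \<and> card F \<le> k}"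
proof -
  have "{(\<Sum>e\<in>F. p e) | F. F \<subseteq> E \<and> card F \<le> k} \<subseteq> (\<lambda>F. \<Sum>e\<in>F. p e) ` Pow E"
    by auto
  then show ?thesis using assms by (meson finite_Pow_iff finite_imageI finite_subset)
qed

lemma hk_ge:
  assumes "finite E" "F \<subseteq> E" "card F \<le> k"
  shows "(\<Sum>e\<in>F. p e) \<le> hk p k E"
  unfolding hk_def using assms hk_fin[OF assms(1)] by (intro Max_ge) auto

lemma hk_obtain:
  assumes "finite E"
  shows "\<exists>F. F \<subseteq> E \<and> card F \<le> k \<and> hk p k E = (\<Sum>e\<in>F. p e)"
proof -
  have ne: "{(\<Sum>e\<in>F. p e) | F. F \<subseteq> E \<and> card F \<le> k} \<noteq> {}" by auto
  have "hk p k E \<in> {(\<Sum>e\<in>F. p e) | F. F \<subseteq> E \<and> card F \<le> k}"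
    unfolding hk_def using Max_in[OF hk_fin[OF assms] ne] .
  then show ?thesis by auto
qed

lemma hk_mono:
  assumes "finite E'" "E \<subseteq> E'"
  shows "hk p k E \<le> hk p k E'"
proof -
  have fE: "finite E" using assms finite_subset by blast
  obtain F where "F \<subseteq> E" "card F \<le> k" "hk p k E = (\<Sum>e\<in>F. p e)"
    using hk_obtain[OF fE] by blast
  then show ?thesis using hk_ge[OF assms(1), where F=F and k=k and p=p] assms by auto
qed

lemma hk_nonneg:
  assumes "finite E"
  shows "0 \<le> hk p k E"
  using hk_ge[OF assms, where F="{}" and k=k and p=p] by simp

lemma hk_empty: "hk p k {} = 0"
proof -
  obtain F where "F \<subseteq> {}" "hk p k {} = (\<Sum>e\<in>F. p e)"
    using hk_obtain[of "{}" k p] by blast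
  then show ?thesis by simp
qed

lemma hk_submod:
  assumes fS: "finite S" and fT: "finite T" and pos: "\<forall>e\<in>S \<union> T. 0 \<le> p e"
  shows "hk p k (S \<union> T) + hk p k (S \<inter> T) \<le> hk p k S + hk p k T"
proof -
  have fU: "finite (S \<union> T)" using fS fT by simp
  obtain A where A: "A \<subseteq> S \<union> T" "card A \<le> k" "hk p k (S \<union> T) = (\<Sum>e\<in>A. p e)"
    using hk_obtain[OF fU] by blast
  obtain B where B: "B \<subseteq> S \<inter> T" "card B \<le> k" "hk p k (S \<inter> T) = (\<Sum>e\<in>B. p e)"
    using hk_obtain[of "S \<inter> T" k p] fS by blast
  have fA: "finite A" using A fU finite_subset by blast
  have fB: "finite B" using B fS finite_subset by blast
  define H0 where "H0 = (A - S) \<union> (A \<inter> B)"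
  define G0 where "G0 = (A - T) \<union> (A \<inter> B)"
  define Fr where "Fr = (A \<inter> S \<inter> T - B) \<union> (B - A)"
  have fFr: "finite Fr" using fA fB unfolding Fr_def by simp
  have cH0: "card H0 \<le> k"
  proof -
    have "card H0 \<le> card A" unfolding H0_def using fA by (intro card_mono) auto
    then show ?thesis using A by simp
  qed
  define y where "y = min (card Fr) (k - card H0)"
  have "y \<le> card Fr" unfolding y_def by simp
  then obtain Y where Y: "Y \<subseteq> Fr" "card Y = y"
    by (rule obtain_subset_with_card_n)
  define H where "H = H0 \<union> Y"
  define G where "G = G0 \<union> (Fr - Y)"
  have fH0: "finite H0" "finite G0" using fA unfolding H0_def G0_def by auto
  have fY: "finite Y" using Y fFr finite_subset by blast
  have disjHY: "H0 \<inter> Y = {}" unfolding H0_def using Y(1) unfolding Fr_def by auto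
  have disjGY: "G0 \<inter> (Fr - Y) = {}" unfolding G0_def Fr_def by auto
  have HT: "H \<subseteq> T" unfolding H_def H0_def using A B Y(1) unfolding Fr_def by auto
  have GS: "G \<subseteq> S" unfolding G_def G0_def using A B Y(1) unfolding Fr_def by auto
  have cardH: "card H = card H0 + y" unfolding H_def
    using card_Un_disjoint[OF fH0(1) fY disjHY] Y by simp
  have cH: "card H \<le> k" using cardH cH0 unfolding y_def by simp
  have cardG: "card G = card G0 + (card Fr - y)" unfolding G_def
    using card_Un_disjoint[OF fH0(2) _ disjGY] fFr Y card_Diff_subset[OF fY Y(1)] by simp
  have cFr: "card Fr = card (A \<inter> S \<inter> T - B) + card (B - A)"
    unfolding Fr_def using fA fB by (intro card_Un_disjoint) auto
  have cH0e: "card H0 = card (A - S) + card (A \<inter> B)"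
    unfolding H0_def using fA B(1) by (intro card_Un_disjoint) auto
  have cG0e: "card G0 = card (A - T) + card (A \<inter> B)"
    unfolding G0_def using fA B(1) by (intro card_Un_disjoint) auto
  have Asplit: "A = (A - S) \<union> (A - T) \<union> (A \<inter> B) \<union> (A \<inter> S \<inter> T - B)"
    using A B by auto
  have cA: "card A = card (A - S) + card (A - T) + card (A \<inter> B) + card (A \<inter> S \<inter> T - B)"
  proof -
    have "card A = card ((A - S) \<union> (A - T) \<union> (A \<inter> B) \<union> (A \<inter> S \<inter> T - B))"
      by (rule arg_cong[OF Asplit])
    also have "\<dots> = card ((A - S) \<union> (A - T) \<union> (A \<inter> B)) + card (A \<inter> S \<inter> T - B)"
      using fA by (intro card_Un_disjoint) auto
    also have "card ((A - S) \<union> (A - T) \<union> (A \<inter> B)) = card ((A - S) \<union> (A - T)) + card (A \<inter> B)"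
      using fA B by (intro card_Un_disjoint) auto
    also have "card ((A - S) \<union> (A - T)) = card (A - S) + card (A - T)"
      using fA A(1) by (intro card_Un_disjoint) auto
    finally show ?thesis .
  qed
  have cB: "card B = card (A \<inter> B) + card (B - A)"
  proof -
    have "B = (A \<inter> B) \<union> (B - A)" by auto
    then have "card B = card ((A \<inter> B) \<union> (B - A))" by (rule arg_cong)
    also have "\<dots> = card (A \<inter> B) + card (B - A)" using fB by (intro card_Un_disjoint) auto
    finally show ?thesis .
  qed
  have cG: "card G \<le> k"
  proof (cases "card Fr \<le> k - card H0")
    case True
    then have "y = card Fr" unfolding y_def by simp
    then show ?thesis using cardG cG0e cH0e cA A(2) by linarith
  next
    case False
    then have "y = k - card H0" unfolding y_def by simp
    then show ?thesis using False cardG cFr cH0e cG0e cA cB A(2) B(2) cH0 by linarith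
  qed
  have sH: "(\<Sum>e\<in>H. p e) = (\<Sum>e\<in>H0. p e) + (\<Sum>e\<in>Y. p e)"
    unfolding H_def by (rule sum.union_disjoint[OF fH0(1) fY disjHY])
  have sG: "(\<Sum>e\<in>G. p e) = (\<Sum>e\<in>G0. p e) + (\<Sum>e\<in>Fr - Y. p e)"
    unfolding G_def using fH0(2) fFr disjGY by (intro sum.union_disjoint) auto
  have sFr: "(\<Sum>e\<in>Fr. p e) = (\<Sum>e\<in>Y. p e) + (\<Sum>e\<in>Fr - Y. p e)"
    using sum.subset_diff[OF Y(1) fFr, of p] by (simp add: add.commute)
  have sFr2: "(\<Sum>e\<in>Fr. p e) = (\<Sum>e\<in>A \<inter> S \<inter> T - B. p e) + (\<Sum>e\<in>B - A. p e)"
    unfolding Fr_def using fA fB by (intro sum.union_disjoint) auto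
  have sH0: "(\<Sum>e\<in>H0. p e) = (\<Sum>e\<in>A - S. p e) + (\<Sum>e\<in>A \<inter> B. p e)"
    unfolding H0_def using fA B(1) by (intro sum.union_disjoint) auto
  have sG0: "(\<Sum>e\<in>G0. p e) = (\<Sum>e\<in>A - T. p e) + (\<Sum>e\<in>A \<inter> B. p e)"
    unfolding G0_def using fA B(1) by (intro sum.union_disjoint) auto
  have sB: "(\<Sum>e\<in>B. p e) = (\<Sum>e\<in>A \<inter> B. p e) + (\<Sum>e\<in>B - A. p e)"
  proof -
    have "B = (A \<inter> B) \<union> (B - A)" by auto
    then have "(\<Sum>e\<in>B. p e) = (\<Sum>e\<in>(A \<inter> B) \<union> (B - A). p e)" by (rule arg_cong)
    also have "\<dots> = (\<Sum>e\<in>A \<inter> B. p e) + (\<Sum>e\<in>B - A. p e)" using fB by (intro sum.union_disjoint) auto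
    finally show ?thesis .
  qed
  have sA: "(\<Sum>e\<in>A. p e) = (\<Sum>e\<in>A - S. p e) + (\<Sum>e\<in>A - T. p e) + (\<Sum>e\<in>A \<inter> B. p e) + (\<Sum>e\<in>A \<inter> S \<inter> T - B. p e)"
  proof -
    have "(\<Sum>e\<in>A. p e) = (\<Sum>e\<in>(A - S) \<union> (A - T) \<union> (A \<inter> B) \<union> (A \<inter> S \<inter> T - B). p e)"
      by (rule arg_cong[OF Asplit])
    also have "\<dots> = (\<Sum>e\<in>(A - S) \<union> (A - T) \<union> (A \<inter> B). p e) + (\<Sum>e\<in>A \<inter> S \<inter> T - B. p e)"
      using fA by (intro sum.union_disjoint) auto
    also have "(\<Sum>e\<in>(A - S) \<union> (A - T) \<union> (A \<inter> B). p e) = (\<Sum>e\<in>(A - S) \<union> (A - T). p e) + (\<Sum>e\<in>A \<inter> B. p e)"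
      using fA B by (intro sum.union_disjoint) auto
    also have "(\<Sum>e\<in>(A - S) \<union> (A - T). p e) = (\<Sum>e\<in>A - S. p e) + (\<Sum>e\<in>A - T. p e)"
      using fA A(1) by (intro sum.union_disjoint) auto
    finally show ?thesis .
  qed
  have "(\<Sum>e\<in>A. p e) + (\<Sum>e\<in>B. p e) = (\<Sum>e\<in>G. p e) + (\<Sum>e\<in>H. p e)"
    using sA sB sG sH sFr sFr2 sH0 sG0 by linarith
  also have "\<dots> \<le> hk p k S + hk p k T"
    using hk_ge[OF fS GS cG, where p=p] hk_ge[OF fT HT cH, where p=p] by simp
  finally show ?thesis using A B by simp
qed

lemma topk_eq: "topk_fun Es p k V = hk p k (edges_of Es V)"
  unfolding topk_fun_def hk_def[symmetric] by (simp add: edges_of_def hk_empty)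

theorem theorem1:
  fixes Vx :: "'a set" and Es :: "'a set set" and p :: "'a set \<Rightarrow> real" and k :: nat
  assumes "simple_graph Vx Es"
    and "\<forall>e\<in>Es. 0 \<le> p e \<and> p e \<le> 1"
    and "k \<ge> 1"
  shows "set_fun_nonneg Vx (topk_fun Es p k)
       \<and> set_fun_normalized (topk_fun Es p k)
       \<and> set_fun_monotone Vx (topk_fun Es p k)
       \<and> set_fun_submodular Vx (topk_fun Es p k)"
proof -
  have fEs: "finite Es"
  proof -
    have "Es \<subseteq> Pow Vx" using assms(1) unfolding simple_graph_def by auto
    then show ?thesis using assms(1) unfolding simple_graph_def by (meson finite_Pow_iff finite_subset)
  qed
  have fE: "finite (edges_of Es V)" for V unfolding edges_of_def using fEs by simp
  have un: "edges_of Es (A \<union> B) = edges_of Es A \<union> edges_of Es B" for A B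
    unfolding edges_of_def by auto
  have int: "edges_of Es (A \<inter> B) \<subseteq> edges_of Es A \<inter> edges_of Es B" for A B
    unfolding edges_of_def by auto
  have mono: "A \<subseteq> B \<Longrightarrow> edges_of Es A \<subseteq> edges_of Es B" for A B
    unfolding edges_of_def by auto
  have pos: "\<forall>e\<in>edges_of Es A \<union> edges_of Es B. 0 \<le> p e" for A B
    using assms(2) unfolding edges_of_def by auto
  show ?thesis
    unfolding set_fun_nonneg_def set_fun_normalized_def set_fun_monotone_def set_fun_submodular_def topk_eq
  proof (intro conjI allI impI)
    show "0 \<le> hk p k (edges_of Es A)" for A using hk_nonneg[OF fE] .
    show "hk p k (edges_of Es {}) = 0" by (simp add: edges_of_def hk_empty)
    show "hk p k (edges_of Es A) \<le> hk p k (edges_of Es B)" if "A \<subseteq> B \<and> B \<subseteq> Vx" for A B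
      using hk_mono[OF fE mono] that by blast
    show "hk p k (edges_of Es (A \<union> B)) + hk p k (edges_of Es (A \<inter> B))
          \<le> hk p k (edges_of Es A) + hk p k (edges_of Es B)" if "A \<subseteq> Vx \<and> B \<subseteq> Vx" for A B
    proof -
      have "hk p k (edges_of Es (A \<inter> B)) \<le> hk p k (edges_of Es A \<inter> edges_of Es B)"
        using hk_mono[OF _ int] fE by blast
      then show ?thesis unfolding un[of A B] using hk_submod[OF fE fE pos, of k A B] by linarith
    qed
  qed
qed

end
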